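(* Let $M=B\circ S$ with $S$ subsampling without replacement with batch size $q$, and let the batch relation be the substitution relation $\simeq_\Delta$ with induced distance $d_\Delta$. Then for every $\alpha>1$ and all datasets $x\simeq_\Delta x'$ of size $N$, $$\Lambda_\alpha(m_x\|m_{x'})\le\max_{y^{(1)}_1,y^{(1)}_2,y^{(2)}_1,y^{(2)}_2\in\mathbb Y}\Lambda_\alpha\big((1-w)b_{y^{(1)}_1}+w\,b_{y^{(1)}_2}\ \big\|\ (1-w)b_{y^{(2)}_1}+w\,b_{y^{(2)}_2}\big)$$ subject to $y^{(1)}_1=y^{(2)}_1$, $d_\Delta(y^{(1)}_1,y^{(1)}_2)\le1$, $d_\Delta(y^{(1)}_1,y^{(2)}_2)\le1$, $d_\Delta(y^{(1)}_2,y^{(2)}_2)\le1$, where $w=q/N$.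
   Context: Finite set $\mathbb A$, datasets are subsets of $\mathbb A$ with more than $q$ elements; batches are subsets of size $q$. Subsampling without replacement with batch size $q$: $s_x(y)=\binom{|x|}{q}^{-1}$ for $y\subseteq x$, $|y|=q$. $B$ assigns a density $b_y$ on $\mathbb R^D$ to each batch; $m_x=\sum_y b_y s_x(y)$. Substitution relation: $u\simeq_\Delta u'$ iff $u'=(u\setminus\{a\})\cup\{a'\}$ for some $a\in u$, $a'\notin u$ (used both for datasets and batches); $d_\Delta$ is the induced distance (length of shortest chain of neighbors, $0$ from a set to itself). $\Lambda_\alpha(p\|q)=\int p^\alpha q^{1-\alpha}dz$. *)

theory Defs
  imports "HOL-Analysis.Analysis" "HOL-Library.Extended_Nat"
begin

definition batches :: "nat \<Rightarrow> 'a set set" where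
  "batches q = {y. card y = q}"

definition subsample :: "nat \<Rightarrow> 'a set \<Rightarrow> 'a set \<Rightarrow> real" where
  "subsample q x y = (if y \<subseteq> x \<and> card y = q then 1 / real (card x choose q) else 0)"

definition mech :: "('a set \<Rightarrow> 'b \<Rightarrow> real) \<Rightarrow> nat \<Rightarrow> 'a set \<Rightarrow> 'b \<Rightarrow> real" where
  "mech B q x z = (\<Sum>y\<in>batches q. B y z * subsample q x y)"

definition subst_nb :: "'a set \<Rightarrow> 'a set \<Rightarrow> bool" where
  "subst_nb u u' \<longleftrightarrow> (\<exists>a\<in>u. \<exists>a'. a' \<notin> u \<and> u' = insert a' (u - {a}))"

definition subst_dist :: "'a set \<Rightarrow> 'a set \<Rightarrow> enat" where
  "subst_dist u u' = (if \<exists>n. (subst_nb ^^ n) u u'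
     then enat (LEAST n. (subst_nb ^^ n) u u') else \<infinity>)"

definition is_density :: "('b::euclidean_space \<Rightarrow> real) \<Rightarrow> bool" where
  "is_density f \<longleftrightarrow> f \<in> borel_measurable lborel \<and> (\<forall>z. 0 \<le> f z)
     \<and> (\<integral>\<^sup>+ z. ennreal (f z) \<partial>lborel) = 1"

definition renyi_Lambda :: "real \<Rightarrow> ('b::euclidean_space \<Rightarrow> real) \<Rightarrow> ('b \<Rightarrow> real) \<Rightarrow> ennreal" where
  "renyi_Lambda \<alpha> p q = (\<integral>\<^sup>+ z. (if q z = 0 then (if p z = 0 then 0 else \<infinity>)
       else ennreal (p z powr \<alpha> * q z powr (1 - \<alpha>))) \<partial>lborel)"

end

theory Submission
  imports Defs
begin

lemma powr_core:
  fixes lam p q :: "'i \<Rightarrow> real"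
  assumes fin: "finite K" and ne: "K \<noteq> {}" and pos: "\<And>i. i\<in>K \<Longrightarrow> lam i > 0 \<and> p i > 0 \<and> q i > 0"
    and a: "\<alpha> > 1"
  shows "(\<Sum>i\<in>K. lam i * p i) powr \<alpha> * (\<Sum>i\<in>K. lam i * q i) powr (1-\<alpha>)
     \<le> (\<Sum>i\<in>K. lam i * (p i powr \<alpha> * q i powr (1-\<alpha>)))"
proof -
  define P where "P = (\<Sum>i\<in>K. lam i * p i)"
  define Q where "Q = (\<Sum>i\<in>K. lam i * q i)"
  have Qp: "Q > 0" unfolding Q_def using fin ne pos by (intro sum_pos) auto
  have Pp: "P > 0" unfolding P_def using fin ne pos by (intro sum_pos) auto
  define mu where "mu i = lam i * q i / Q" for i
  define t where "t i = p i / q i" for i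
  have "(\<lambda>x. x powr \<alpha>) (\<Sum>i\<in>K. mu i *\<^sub>R t i) \<le> (\<Sum>i\<in>K. mu i * (\<lambda>x. x powr \<alpha>) (t i))"
  proof (rule convex_on_sum[OF fin ne powr_convex[of \<alpha>]])
    show "sum mu K = 1" unfolding mu_def using Qp by (simp add: Q_def sum_divide_distrib[symmetric])
  qed (use a pos in \<open>auto simp: mu_def t_def Qp less_imp_le\<close>)
  moreover have "(\<Sum>i\<in>K. mu i *\<^sub>R t i) = P / Q"
    unfolding mu_def t_def P_def by (auto simp: sum_divide_distrib intro!: sum.cong dest: pos)
  ultimately have J: "(P/Q) powr \<alpha> \<le> (\<Sum>i\<in>K. mu i * t i powr \<alpha>)" by simp
  have "P powr \<alpha> * Q powr (1-\<alpha>) = Q * (P/Q) powr \<alpha>"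
    using Pp Qp by (simp add: powr_divide powr_diff)
  also have "\<dots> \<le> Q * (\<Sum>i\<in>K. mu i * t i powr \<alpha>)" using J Qp by simp
  also have "\<dots> = (\<Sum>i\<in>K. lam i * (p i powr \<alpha> * q i powr (1-\<alpha>)))"
    unfolding sum_distrib_left
  proof (rule sum.cong)
    fix i assume "i \<in> K"
    with pos[of i] Qp show "Q * (mu i * t i powr \<alpha>) = lam i * (p i powr \<alpha> * q i powr (1-\<alpha>))"
      by (simp add: mu_def t_def powr_divide powr_diff)
  qed simp
  finally show ?thesis unfolding P_def Q_def .
qed

definition phi :: "real \<Rightarrow> real \<Rightarrow> real \<Rightarrow> ennreal" where
  "phi \<alpha> a b = (if b = 0 then (if a = 0 then 0 else \<infinity>) else ennreal (a powr \<alpha> * b powr (1-\<alpha>)))"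

lemma phi_convex:
  fixes lam p q :: "'i \<Rightarrow> real"
  assumes fin: "finite I" and nn: "\<And>i. i\<in>I \<Longrightarrow> lam i \<ge> 0 \<and> p i \<ge> 0 \<and> q i \<ge> 0"
    and a: "\<alpha> > 1"
  shows "phi \<alpha> (\<Sum>i\<in>I. lam i * p i) (\<Sum>i\<in>I. lam i * q i) \<le> (\<Sum>i\<in>I. ennreal (lam i) * phi \<alpha> (p i) (q i))"
proof (cases "\<exists>i\<in>I. lam i > 0 \<and> p i > 0 \<and> q i = 0")
  case True
  then obtain i where i: "i \<in> I" "lam i > 0" "p i > 0" "q i = 0" by blast
  have "ennreal (lam i) * phi \<alpha> (p i) (q i) = \<infinity>" using i by (simp add: phi_def)
  moreover have "ennreal (lam i) * phi \<alpha> (p i) (q i) \<le> (\<Sum>i\<in>I. ennreal (lam i) * phi \<alpha> (p i) (q i))"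
    by (rule member_le_sum[OF i(1)]) (auto simp: fin)
  ultimately show ?thesis by (simp add: top_unique)
next
  case False
  define J where "J = {i\<in>I. lam i > 0 \<and> p i > 0}"
  have JI: "J \<subseteq> I" and finJ: "finite J" using fin by (auto simp: J_def)
  have qJ: "\<And>i. i \<in> J \<Longrightarrow> q i > 0" using False nn unfolding J_def by force
  have PJ: "(\<Sum>i\<in>I. lam i * p i) = (\<Sum>i\<in>J. lam i * p i)"
    by (rule sum.mono_neutral_right[OF fin JI]) (use nn in \<open>force simp: J_def\<close>)
  show ?thesis
  proof (cases "J = {}")
    case True
    then have "(\<Sum>i\<in>I. lam i * p i) = 0" using PJ by simp
    then have "phi \<alpha> (\<Sum>i\<in>I. lam i * p i) (\<Sum>i\<in>I. lam i * q i) = 0" using a by (simp add: phi_def)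
    then show ?thesis by simp
  next
    case ne: False
    define P where "P = (\<Sum>i\<in>J. lam i * p i)"
    define QJ where "QJ = (\<Sum>i\<in>J. lam i * q i)"
    define Q where "Q = (\<Sum>i\<in>I. lam i * q i)"
    have QJp: "QJ > 0" unfolding QJ_def using finJ ne qJ by (intro sum_pos) (auto simp: J_def)
    have "QJ \<le> Q" unfolding QJ_def Q_def by (rule sum_mono2[OF fin JI]) (use nn in auto)
    have Pp: "P \<ge> 0" unfolding P_def by (rule sum_nonneg) (use nn JI in auto)
    have core: "P powr \<alpha> * QJ powr (1-\<alpha>) \<le> (\<Sum>i\<in>J. lam i * (p i powr \<alpha> * q i powr (1-\<alpha>)))"
      unfolding P_def QJ_def by (rule powr_core[OF finJ ne _ a]) (auto simp: J_def qJ)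
    have "Q powr (1-\<alpha>) \<le> QJ powr (1-\<alpha>)" using a QJp \<open>QJ \<le> Q\<close> by (intro powr_mono2') auto
    then have "P powr \<alpha> * Q powr (1-\<alpha>) \<le> P powr \<alpha> * QJ powr (1-\<alpha>)" by (simp add: mult_left_mono)
    also note core
    finally have r: "P powr \<alpha> * Q powr (1-\<alpha>) \<le> (\<Sum>i\<in>J. lam i * (p i powr \<alpha> * q i powr (1-\<alpha>)))" .
    have "phi \<alpha> (\<Sum>i\<in>I. lam i * p i) (\<Sum>i\<in>I. lam i * q i) = ennreal (P powr \<alpha> * Q powr (1-\<alpha>))"
      using QJp \<open>QJ \<le> Q\<close> by (simp add: phi_def PJ P_def[symmetric] Q_def[symmetric])
    also have "\<dots> \<le> ennreal (\<Sum>i\<in>J. lam i * (p i powr \<alpha> * q i powr (1-\<alpha>)))" using r by (rule ennreal_leI)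
    also have "\<dots> = (\<Sum>i\<in>J. ennreal (lam i) * phi \<alpha> (p i) (q i))"
    proof (subst sum_ennreal[symmetric])
      show "\<And>i. i \<in> J \<Longrightarrow> 0 \<le> lam i * (p i powr \<alpha> * q i powr (1-\<alpha>))" using JI nn by force
      show "(\<Sum>i\<in>J. ennreal (lam i * (p i powr \<alpha> * q i powr (1-\<alpha>)))) = (\<Sum>i\<in>J. ennreal (lam i) * phi \<alpha> (p i) (q i))"
      proof (rule sum.cong)
        fix i assume "i \<in> J"
        with qJ[of i] JI nn[of i] show "ennreal (lam i * (p i powr \<alpha> * q i powr (1-\<alpha>))) = ennreal (lam i) * phi \<alpha> (p i) (q i)"
          by (auto simp: phi_def ennreal_mult[symmetric])
      qed simp
    qed
    also have "\<dots> \<le> (\<Sum>i\<in>I. ennreal (lam i) * phi \<alpha> (p i) (q i))"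
      by (rule sum_mono2[OF fin JI]) auto
    finally show ?thesis .
  qed
qed

lemma Lambda_phi: "renyi_Lambda \<alpha> p q = (\<integral>\<^sup>+ z. phi \<alpha> (p z) (q z) \<partial>lborel)"
  unfolding renyi_Lambda_def phi_def ..

lemma phi_meas:
  assumes "f \<in> borel_measurable M" "g \<in> borel_measurable M"
  shows "(\<lambda>z. phi \<alpha> (f z) (g z)) \<in> borel_measurable M"
  unfolding phi_def using assms by measurable

lemma Lambda_mix:
  fixes f g :: "'i \<Rightarrow> 'b::euclidean_space \<Rightarrow> real"
  assumes fin: "finite I" and nn: "\<And>i. i\<in>I \<Longrightarrow> lam i \<ge> 0"
    and fg: "\<And>i z. i\<in>I \<Longrightarrow> f i z \<ge> 0 \<and> g i z \<ge> 0"
    and ms: "\<And>i. i\<in>I \<Longrightarrow> f i \<in> borel_measurable lborel \<and> g i \<in> borel_measurable lborel"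
    and a: "\<alpha> > 1"
  shows "renyi_Lambda \<alpha> (\<lambda>z. \<Sum>i\<in>I. lam i * f i z) (\<lambda>z. \<Sum>i\<in>I. lam i * g i z)
     \<le> (\<Sum>i\<in>I. ennreal (lam i) * renyi_Lambda \<alpha> (f i) (g i))"
proof -
  have "renyi_Lambda \<alpha> (\<lambda>z. \<Sum>i\<in>I. lam i * f i z) (\<lambda>z. \<Sum>i\<in>I. lam i * g i z)
     \<le> (\<integral>\<^sup>+ z. (\<Sum>i\<in>I. ennreal (lam i) * phi \<alpha> (f i z) (g i z)) \<partial>lborel)"
    unfolding Lambda_phi by (rule nn_integral_mono, rule phi_convex[OF fin _ a]) (use nn fg in auto)
  also have "\<dots> = (\<Sum>i\<in>I. (\<integral>\<^sup>+ z. ennreal (lam i) * phi \<alpha> (f i z) (g i z) \<partial>lborel))"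
  proof (rule nn_integral_sum)
    fix i assume "i \<in> I"
    then have "(\<lambda>z. phi \<alpha> (f i z) (g i z)) \<in> borel_measurable lborel" using ms by (blast intro: phi_meas)
    then show "(\<lambda>z. ennreal (lam i) * phi \<alpha> (f i z) (g i z)) \<in> borel_measurable lborel" by measurable
  qed
  also have "\<dots> = (\<Sum>i\<in>I. ennreal (lam i) * renyi_Lambda \<alpha> (f i) (g i))"
    unfolding Lambda_phi
    by (rule sum.cong[OF refl], rule nn_integral_cmult) (use ms in \<open>blast intro: phi_meas\<close>)
  finally show ?thesis .
qed

lemma mech_decomp:
  fixes B :: "'a::finite set \<Rightarrow> 'b \<Rightarrow> real" and x :: "'a set"
  assumes ax: "a \<in> x" and q0: "0 < q" and qx: "q < card x"
  shows "mech B q x z = (\<Sum>p\<in>Sigma {y. y \<subseteq> x - {a} \<and> card y = q} (\<lambda>y. y).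
      (1 / real (card (Sigma {y. y \<subseteq> x - {a} \<and> card y = q} (\<lambda>y. y)))) *
      ((1 - real q / real (card x)) * B (fst p) z + (real q / real (card x)) * B (insert a (fst p - {snd p})) z))"
proof -
  define N where "N = card x"
  define S where "S = x - {a}"
  define Y1 where "Y1 = {y. y \<subseteq> S \<and> card y = q}"
  define Y2 where "Y2 = {y. y \<subseteq> x \<and> card y = q \<and> a \<in> y}"
  define P where "P = Sigma Y1 (\<lambda>y. y)"
  define g where "g p = insert a (fst p - {snd p})" for p :: "'a set \<times> 'a"
  define C where "C = real (N choose q)"
  define C1 where "C1 = real ((N - 1) choose q)"
  define S1 where "S1 = (\<Sum>y\<in>Y1. B y z)"
  define S2 where "S2 = (\<Sum>y\<in>Y2. B y z)"
  have finx: "finite x" by simp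
  have cS: "card S = N - 1" using ax by (simp add: S_def N_def)
  have N0: "N > 0" using qx N_def by simp
  have cY1: "card Y1 = (N - 1) choose q" unfolding Y1_def using n_subsets[of S q] cS by simp
  have C1p: "C1 > 0" unfolding C1_def using qx N_def by simp
  have Cp: "C > 0" unfolding C_def using qx N_def by simp
  have CC: "C * (real N - real q) = real N * C1"
  proof -
    have "(N - q) * (N choose q) = N * ((N - 1) choose q)" by (rule binomial_absorb_comp)
    then have "real ((N - q) * (N choose q)) = real (N * ((N - 1) choose q))" by simp
    then show ?thesis using qx N_def by (simp add: C_def C1_def of_nat_diff algebra_simps)
  qed
  have finY1: "finite Y1" and finY2: "finite Y2" by simp_all
  have finP: "finite P" unfolding P_def by simp
  have cP: "card P = q * ((N - 1) choose q)"
  proof -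
    have "card P = (\<Sum>y\<in>Y1. card y)" unfolding P_def using finY1 by simp
    also have "\<dots> = (\<Sum>y\<in>Y1. q)" by (rule sum.cong) (auto simp: Y1_def)
    finally show ?thesis by (simp add: cY1)
  qed
  have m: "mech B q x z = (S1 + S2) / C"
  proof -
    have "mech B q x z = (\<Sum>y\<in>batches q. if y \<subseteq> x then B y z / C else 0)"
      unfolding mech_def subsample_def batches_def C_def N_def by (intro sum.cong) auto
    also have "\<dots> = (\<Sum>y\<in>{y\<in>batches q. y \<subseteq> x}. B y z / C)"
      by (simp add: sum.inter_filter)
    also have "{y\<in>batches q. y \<subseteq> x} = Y1 \<union> Y2"
      unfolding Y1_def Y2_def S_def batches_def by auto
    also have "(\<Sum>y\<in>Y1 \<union> Y2. B y z / C) = (\<Sum>y\<in>Y1. B y z / C) + (\<Sum>y\<in>Y2. B y z / C)"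
      by (rule sum.union_disjoint) (auto simp: Y1_def Y2_def S_def)
    finally show ?thesis by (simp add: S1_def S2_def sum_divide_distrib add_divide_distrib)
  qed
  have F: "(\<Sum>p\<in>P. B (fst p) z) = real q * S1"
  proof -
    have "(\<Sum>y\<in>Y1. \<Sum>c\<in>y. B y z) = (\<Sum>(y,c)\<in>P. B y z)"
      unfolding P_def by (rule sum.Sigma) (auto simp: Y1_def)
    then have "(\<Sum>p\<in>P. B (fst p) z) = (\<Sum>y\<in>Y1. \<Sum>c\<in>y. B y z)"
      by (simp add: case_prod_beta')
    also have "\<dots> = (\<Sum>y\<in>Y1. real q * B y z)"
      by (rule sum.cong) (auto simp: Y1_def)
    finally show ?thesis by (simp add: S1_def sum_distrib_left)
  qed
  have G: "(\<Sum>p\<in>P. B (g p) z) = (real N - real q) * S2"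
  proof -
    have im: "g ` P \<subseteq> Y2"
    proof
      fix y assume "y \<in> g ` P"
      then obtain y1 c where p: "y1 \<subseteq> S" "card y1 = q" "c \<in> y1" "y = insert a (y1 - {c})"
        unfolding P_def Y1_def g_def by auto
      have "a \<notin> y1" using p S_def by auto
      then have "card y = q" using p q0 by (simp add: card.insert_remove finite_subset[OF _ finx])
      then show "y \<in> Y2" using p ax S_def by (auto simp: Y2_def)
    qed
    have fib: "card {p \<in> P. g p = y} = N - q" if y: "y \<in> Y2" for y
    proof -
      have "{p \<in> P. g p = y} = (\<lambda>c. (insert c (y - {a}), c)) ` (x - y)"
      proof (rule set_eqI, rule iffI)
        fix p assume "p \<in> {p \<in> P. g p = y}"
        then obtain y1 c where p: "p = (y1, c)" "y1 \<subseteq> S" "card y1 = q" "c \<in> y1" "insert a (y1 - {c}) = y"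
          unfolding P_def Y1_def g_def by auto
        have "a \<notin> y1" using p S_def by auto
        then have "c \<notin> y" "c \<in> x" "y1 = insert c (y - {a})" using p S_def by auto
        then show "p \<in> (\<lambda>c. (insert c (y - {a}), c)) ` (x - y)" using p by auto
      next
        fix p assume "p \<in> (\<lambda>c. (insert c (y - {a}), c)) ` (x - y)"
        then obtain c where p: "p = (insert c (y - {a}), c)" "c \<in> x" "c \<notin> y" by auto
        have ay: "a \<in> y" "y \<subseteq> x" "card y = q" using y by (auto simp: Y2_def)
        have fy: "finite y" using finite_subset[OF ay(2) finx] .
        have "card (insert c (y - {a})) = q" using p ay fy q0 by (simp add: card_Diff_singleton)
        moreover have "insert c (y - {a}) \<subseteq> S" using p ay S_def by auto
        moreover have "insert a (insert c (y - {a}) - {c}) = y" using p ay by auto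
        ultimately show "p \<in> {p \<in> P. g p = y}" using p by (auto simp: P_def Y1_def g_def)
      qed
      moreover have "card ((\<lambda>c. (insert c (y - {a}), c)) ` (x - y)) = card (x - y)"
        by (rule card_image) (auto simp: inj_on_def)
      moreover have "card (x - y) = N - q" using y N_def by (auto simp: Y2_def card_Diff_subset finite_subset)
      ultimately show ?thesis by simp
    qed
    have "(\<Sum>p\<in>P. B (g p) z) = (\<Sum>y\<in>Y2. \<Sum>p\<in>{p \<in> P. g p = y}. B (g p) z)"
      by (rule sum.group[OF finP finY2 im, symmetric])
    also have "\<dots> = (\<Sum>y\<in>Y2. real (N - q) * B y z)"
      by (rule sum.cong[OF refl]) (simp add: fib)
    finally show ?thesis using qx N_def by (simp add: S2_def sum_distrib_left of_nat_diff)
  qed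
  have "(\<Sum>p\<in>P. (1 / real (card P)) * ((1 - real q / real N) * B (fst p) z + (real q / real N) * B (g p) z))
      = (1 / real (card P)) * ((1 - real q / real N) * (\<Sum>p\<in>P. B (fst p) z) + (real q / real N) * (\<Sum>p\<in>P. B (g p) z))"
    by (simp only: sum_distrib_left sum.distrib distrib_left mult.assoc)
  also have "\<dots> = (1 / (real q * C1)) * ((1 - real q / real N) * (real q * S1) + (real q / real N) * ((real N - real q) * S2))"
    by (simp add: F G cP C1_def)
  also have "\<dots> = ((real N - real q) / (real N * C1)) * (S1 + S2)"
    using q0 N0 C1p by (simp add: field_simps)
  also have "(real N - real q) / (real N * C1) = 1 / C"
    using N0 C1p Cp CC by (simp add: divide_simps) (simp add: algebra_simps)
  finally have "(\<Sum>p\<in>P. (1 / real (card P)) * ((1 - real q / real N) * B (fst p) z + (real q / real N) * B (g p) z)) = (S1 + S2) / C"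
    by simp
  then show ?thesis using m by (simp add: P_def Y1_def S_def g_def N_def)
qed

lemma nb_dist: "subst_nb u v \<Longrightarrow> subst_dist u v \<le> 1"
proof -
  assume h: "subst_nb u v"
  have "(subst_nb ^^ 1) u v" using h by auto
  then have "(LEAST n. (subst_nb ^^ n) u v) \<le> 1" by (rule Least_le)
  moreover have "\<exists>n. (subst_nb ^^ n) u v" using \<open>(subst_nb ^^ 1) u v\<close> by blast
  ultimately show ?thesis unfolding subst_dist_def
    by (auto simp: one_enat_def)
qed

lemma refl_dist: "subst_dist u u \<le> 1"
proof -
  have "(subst_nb ^^ 0) u u" by simp
  then have "(LEAST n. (subst_nb ^^ n) u u) = 0" by (rule Least_eq_0)
  moreover have "\<exists>n. (subst_nb ^^ n) u u" using \<open>(subst_nb ^^ 0) u u\<close> by blast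
  ultimately show ?thesis unfolding subst_dist_def by (auto simp: zero_enat_def[symmetric])
qed

theorem mainTheorem11:
  fixes B :: "'a::finite set \<Rightarrow> 'b::euclidean_space \<Rightarrow> real"
    and q N :: nat and \<alpha> :: real and x x' :: "'a set"
  assumes dens: "\<forall>y\<in>batches q. is_density (B y)"
    and alpha: "\<alpha> > 1"
    and nb: "subst_nb x x'"
    and size: "card x = N"
    and dsx: "q < card x" and dsx': "q < card x'"
  shows "renyi_Lambda \<alpha> (mech B q x) (mech B q x') \<le>
    Max {renyi_Lambda \<alpha>
           (\<lambda>z. (1 - real q / real N) * B y11 z + (real q / real N) * B y12 z)
           (\<lambda>z. (1 - real q / real N) * B y21 z + (real q / real N) * B y22 z)
         | y11 y12 y21 y22.
           y11 \<in> batches q \<and> y12 \<in> batches q \<and> y21 \<in> batches q \<and> y22 \<in> batches q \<and>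
           y11 = y21 \<and> subst_dist y11 y12 \<le> 1 \<and> subst_dist y11 y22 \<le> 1 \<and>
           subst_dist y12 y22 \<le> 1}"
proof -
  define Ms where "Ms = {renyi_Lambda \<alpha>
           (\<lambda>z. (1 - real q / real N) * B y11 z + (real q / real N) * B y12 z)
           (\<lambda>z. (1 - real q / real N) * B y21 z + (real q / real N) * B y22 z)
         | y11 y12 y21 y22.
           y11 \<in> batches q \<and> y12 \<in> batches q \<and> y21 \<in> batches q \<and> y22 \<in> batches q \<and>
           y11 = y21 \<and> subst_dist y11 y12 \<le> 1 \<and> subst_dist y11 y22 \<le> 1 \<and>
           subst_dist y12 y22 \<le> 1}"
  let ?F = "\<lambda>(y11::'a set, y12::'a set, y21::'a set, y22::'a set). renyi_Lambda \<alpha>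
           (\<lambda>z. (1 - real q / real N) * B y11 z + (real q / real N) * B y12 z)
           (\<lambda>z. (1 - real q / real N) * B y21 z + (real q / real N) * B y22 z)"
  have finMs: "finite Ms"
  proof (rule finite_subset[of _ "?F ` UNIV"])
    show "Ms \<subseteq> ?F ` UNIV"
    proof
      fix v assume "v \<in> Ms"
      then obtain y11 y12 y21 y22 where "v = ?F (y11, y12, y21, y22)" unfolding Ms_def by auto
      then show "v \<in> ?F ` UNIV" by blast
    qed
  qed simp
  have inMs: "renyi_Lambda \<alpha>
           (\<lambda>z. (1 - real q / real N) * B y11 z + (real q / real N) * B y12 z)
           (\<lambda>z. (1 - real q / real N) * B y11 z + (real q / real N) * B y22 z) \<le> Max Ms"
    if "y11 \<in> batches q" "y12 \<in> batches q" "y22 \<in> batches q"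
       "subst_dist y11 y12 \<le> 1" "subst_dist y11 y22 \<le> 1" "subst_dist y12 y22 \<le> 1" for y11 y12 y22
    by (rule Max_ge[OF finMs]) (unfold Ms_def, use that in blast)
  have "renyi_Lambda \<alpha> (mech B q x) (mech B q x') \<le> Max Ms"
  proof (cases "q = 0")
    case True
    have b0: "batches q = {{} :: 'a set}" using True by (auto simp: batches_def card_eq_0_iff)
    have m: "mech B q y = B {}" for y unfolding mech_def b0 using True by (simp add: subsample_def fun_eq_iff)
    have "renyi_Lambda \<alpha> (\<lambda>z. (1 - real q / real N) * B {} z + (real q / real N) * B {} z)
           (\<lambda>z. (1 - real q / real N) * B {} z + (real q / real N) * B {} z) \<le> Max Ms"
      by (rule inMs) (auto simp: b0 refl_dist)
    then show ?thesis unfolding m using True by simp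
  next
    case False
    then have q0: "q > 0" by simp
    obtain a a' where a: "a \<in> x" "a' \<notin> x" "x' = insert a' (x - {a})" using nb unfolding subst_nb_def by blast
    have a'x': "a' \<in> x'" and x'a: "x' - {a'} = x - {a}" using a by auto
    have cx': "card x' = N" using a size dsx by (simp add: card.insert_remove)
    define P where "P = Sigma {y. y \<subseteq> x - {a} \<and> card y = q} (\<lambda>y. y)"
    define lam where "lam = 1 / real (card P)"
    define w where "w = real q / real N"
    define f where "f p = (\<lambda>z. (1 - w) * B (fst p) z + w * B (insert a (fst p - {snd p})) z)" for p
    define g where "g p = (\<lambda>z. (1 - w) * B (fst p) z + w * B (insert a' (fst p - {snd p})) z)" for p
    have mx: "mech B q x = (\<lambda>z. \<Sum>p\<in>P. lam * f p z)"
      using mech_decomp[OF a(1) q0 dsx, of B] unfolding P_def lam_def f_def w_def size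
      by (auto simp: fun_eq_iff)
    have mx': "mech B q x' = (\<lambda>z. \<Sum>p\<in>P. lam * g p z)"
      using mech_decomp[OF a'x' q0 dsx', of B] unfolding P_def lam_def g_def w_def cx' x'a
      by (auto simp: fun_eq_iff)
    have finP: "finite P" unfolding P_def by simp
    have w01: "0 \<le> w" "w \<le> 1" using dsx size by (auto simp: w_def)
    have Pprops: "fst p \<in> batches q \<and> insert a (fst p - {snd p}) \<in> batches q \<and> insert a' (fst p - {snd p}) \<in> batches q
        \<and> subst_nb (fst p) (insert a (fst p - {snd p})) \<and> subst_nb (fst p) (insert a' (fst p - {snd p}))
        \<and> subst_nb (insert a (fst p - {snd p})) (insert a' (fst p - {snd p}))" if "p \<in> P" for p
    proof -
      obtain y c where p: "p = (y, c)" "y \<subseteq> x - {a}" "card y = q" "c \<in> y" using \<open>p \<in> P\<close> unfolding P_def by auto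
      have fy: "finite y" by simp
      have ay: "a \<notin> y" "a' \<notin> y" using p a by auto
      have c1: "card (insert a (y - {c})) = q" using p ay q0 by (simp add: card_Diff_singleton)
      have c2: "card (insert a' (y - {c})) = q" using p ay q0 by (simp add: card_Diff_singleton)
      have n1: "subst_nb y (insert a (y - {c}))" unfolding subst_nb_def using p ay by blast
      have n2: "subst_nb y (insert a' (y - {c}))" unfolding subst_nb_def using p ay by blast
      have "a' \<notin> insert a (y - {c})" using a ay by auto
      moreover have "insert a' (y - {c}) = insert a' (insert a (y - {c}) - {a})" using ay by auto
      ultimately have n3: "subst_nb (insert a (y - {c})) (insert a' (y - {c}))" unfolding subst_nb_def by blast
      show ?thesis using p c1 c2 n1 n2 n3 by (simp add: batches_def)
    qed
    have "renyi_Lambda \<alpha> (mech B q x) (mech B q x') \<le> (\<Sum>p\<in>P. ennreal lam * renyi_Lambda \<alpha> (f p) (g p))"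
      unfolding mx mx'
    proof (rule Lambda_mix[OF finP _ _ _ alpha])
      show "\<And>i. i \<in> P \<Longrightarrow> 0 \<le> lam" by (simp add: lam_def)
      fix p assume p: "p \<in> P"
      have bs: "is_density (B (fst p))" "is_density (B (insert a (fst p - {snd p})))"
        "is_density (B (insert a' (fst p - {snd p})))" using Pprops[OF p] dens by auto
      then show "f p \<in> borel_measurable lborel \<and> g p \<in> borel_measurable lborel"
        unfolding f_def g_def is_density_def by auto
      fix z show "0 \<le> f p z \<and> 0 \<le> g p z" using bs w01 unfolding f_def g_def is_density_def by auto
    qed
    also have "\<dots> \<le> (\<Sum>p\<in>P. ennreal lam * Max Ms)"
    proof (rule sum_mono, rule mult_left_mono)
      fix p assume p: "p \<in> P"
      show "renyi_Lambda \<alpha> (f p) (g p) \<le> Max Ms"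
        unfolding f_def g_def w_def using Pprops[OF p] by (intro inMs) (auto intro: nb_dist)
    qed simp
    also have "\<dots> = ennreal (\<Sum>p\<in>P. lam) * Max Ms"
    proof -
      have "(\<Sum>p\<in>P. ennreal lam * Max Ms) = (\<Sum>p\<in>P. ennreal lam) * Max Ms" by (rule sum_distrib_right[symmetric])
      also have "(\<Sum>p\<in>P. ennreal lam) = ennreal (\<Sum>p\<in>P. lam)" by (rule sum_ennreal) (simp add: lam_def)
      finally show ?thesis .
    qed
    also have "(\<Sum>p\<in>P. lam) = 1"
    proof -
      have "q \<le> card (x - {a})" using dsx a by simp
      then obtain y where "y \<subseteq> x - {a}" "card y = q" by (meson obtain_subset_with_card_n)
      moreover obtain c where "c \<in> y" using q0 \<open>card y = q\<close> by (metis card.empty ex_in_conv less_numeral_extra(3))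
      ultimately have "(y, c) \<in> P" unfolding P_def by auto
      then have "card P > 0" using finP card_gt_0_iff by blast
      then show ?thesis by (auto simp: lam_def)
    qed
    finally show ?thesis by simp
  qed
  then show ?thesis unfolding Ms_def .
qed

end
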